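(* Let $G$ be a two-directional orthogonal ray graph with given bipartition $(U,V)$ and without twins. Then $G$ has exactly one normalized representation if and only if $G$ is a chain graph.
   Context: All graphs are finite and simple. $G$ is a bipartite graph with a fixed bipartition $(U,V)$; $N(x)$ denotes the open neighborhood of $x$. Standing assumption: $G$ has no twins, i.e. no two distinct vertices $x\neq y$ with $N(x)=N(y)$. A representation of $G$ is a pair $(<_x,<_y)$ of linear orders on $V(G)$ such that for all $u\in U$ and $v\in V$: $uv\in E(G)$ iff ($u<_x v$ and $u<_y v$). $G$ is a two-directional orthogonal ray graph if it has a representation. A representation $(<_x,<_y)$ is normalized if: (a) for all $u_1,u_2\in U$: ($u_1<_x u_2$ and $u_1<_y u_2$) iff $N(u_1)\supsetneq N(u_2)$; (b) for all $v_1,v_2\in V$: ($v_1<_x v_2$ and $v_1<_y v_2$) iff $N(v_1)\subsetneq N(v_2)$; (c) for all $u\in U$, $v\in V$: ($v<_x u$ and $v<_y u$) iff for every $v'\in N(u)$, $N(v)\subsetneq N(v')$. Two normalized representations are different if they differ as pairs of linear orders. A bipartite graph with bipartition $(U,V)$ is a chain graph if the neighborhoods $\{N(u):u\in U\}$ are linearly ordered by inclusion (equivalently, there is a linear order $<_U$ on $U$ with $u_1<_U u_2 \iff N(u_1)\subseteq N(u_2)$). *)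

theory Defs
  imports Main
begin

definition bipartite_graph :: "'a set \<Rightarrow> 'a set \<Rightarrow> ('a \<Rightarrow> 'a \<Rightarrow> bool) \<Rightarrow> bool" where
  "bipartite_graph U V E \<longleftrightarrow> finite U \<and> finite V \<and> U \<inter> V = {} \<and>
     (\<forall>x y. E x y \<longrightarrow> E y x) \<and>
     (\<forall>x y. E x y \<longrightarrow> (x \<in> U \<and> y \<in> V) \<or> (x \<in> V \<and> y \<in> U))"

definition nbhd :: "('a \<Rightarrow> 'a \<Rightarrow> bool) \<Rightarrow> 'a \<Rightarrow> 'a set" where
  "nbhd E x = {y. E x y}"

definition no_twins :: "'a set \<Rightarrow> 'a set \<Rightarrow> ('a \<Rightarrow> 'a \<Rightarrow> bool) \<Rightarrow> bool" where
  "no_twins U V E \<longleftrightarrow> (\<forall>x \<in> U \<union> V. \<forall>y \<in> U \<union> V. x \<noteq> y \<longrightarrow> nbhd E x \<noteq> nbhd E y)"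

definition lin_order :: "'a set \<Rightarrow> 'a rel \<Rightarrow> bool" where
  "lin_order A r \<longleftrightarrow> r \<subseteq> A \<times> A \<and> strict_linear_order_on A r"

definition representation ::
  "'a set \<Rightarrow> 'a set \<Rightarrow> ('a \<Rightarrow> 'a \<Rightarrow> bool) \<Rightarrow> 'a rel \<Rightarrow> 'a rel \<Rightarrow> bool" where
  "representation U V E X Y \<longleftrightarrow> lin_order (U \<union> V) X \<and> lin_order (U \<union> V) Y \<and>
     (\<forall>u \<in> U. \<forall>v \<in> V. E u v \<longleftrightarrow> ((u, v) \<in> X \<and> (u, v) \<in> Y))"

definition tdor_graph :: "'a set \<Rightarrow> 'a set \<Rightarrow> ('a \<Rightarrow> 'a \<Rightarrow> bool) \<Rightarrow> bool" where
  "tdor_graph U V E \<longleftrightarrow> (\<exists>X Y. representation U V E X Y)"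

definition normalized ::
  "'a set \<Rightarrow> 'a set \<Rightarrow> ('a \<Rightarrow> 'a \<Rightarrow> bool) \<Rightarrow> 'a rel \<Rightarrow> 'a rel \<Rightarrow> bool" where
  "normalized U V E X Y \<longleftrightarrow> representation U V E X Y \<and>
     (\<forall>u1 \<in> U. \<forall>u2 \<in> U. ((u1, u2) \<in> X \<and> (u1, u2) \<in> Y) \<longleftrightarrow> nbhd E u1 \<supset> nbhd E u2) \<and>
     (\<forall>v1 \<in> V. \<forall>v2 \<in> V. ((v1, v2) \<in> X \<and> (v1, v2) \<in> Y) \<longleftrightarrow> nbhd E v1 \<subset> nbhd E v2) \<and>
     (\<forall>u \<in> U. \<forall>v \<in> V. ((v, u) \<in> X \<and> (v, u) \<in> Y) \<longleftrightarrow>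
         (\<forall>v' \<in> nbhd E u. nbhd E v \<subset> nbhd E v'))"

definition chain_graph :: "'a set \<Rightarrow> 'a set \<Rightarrow> ('a \<Rightarrow> 'a \<Rightarrow> bool) \<Rightarrow> bool" where
  "chain_graph U V E \<longleftrightarrow>
     (\<forall>u1 \<in> U. \<forall>u2 \<in> U. nbhd E u1 \<subseteq> nbhd E u2 \<or> nbhd E u2 \<subseteq> nbhd E u1)"

end

theory Submission
  imports Defs
begin

definition kU :: "'a set \<Rightarrow> ('a \<Rightarrow> 'a \<Rightarrow> bool) \<Rightarrow> 'a \<Rightarrow> nat" where
  "kU V E u = 2 * card (V - nbhd E u)"

definition kV :: "'a set \<Rightarrow> ('a \<Rightarrow> 'a \<Rightarrow> bool) \<Rightarrow> 'a \<Rightarrow> nat" where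
  "kV V E v = 2 * card {v' \<in> V. nbhd E v' \<subset> nbhd E v} + 1"

definition key :: "'a set \<Rightarrow> 'a set \<Rightarrow> ('a \<Rightarrow> 'a \<Rightarrow> bool) \<Rightarrow> 'a \<Rightarrow> nat" where
  "key U V E x = (if x \<in> U then kU V E x else kV V E x)"

definition KR :: "'a set \<Rightarrow> 'a set \<Rightarrow> ('a \<Rightarrow> 'a \<Rightarrow> bool) \<Rightarrow> 'a rel" where
  "KR U V E = {(a,b). a \<in> U \<union> V \<and> b \<in> U \<union> V \<and> key U V E a < key U V E b}"

lemma bip_sym: "bipartite_graph U V E \<Longrightarrow> E x y \<longleftrightarrow> E y x"
  unfolding bipartite_graph_def by blast

lemma bip_nU: "bipartite_graph U V E \<Longrightarrow> u \<in> U \<Longrightarrow> nbhd E u \<subseteq> V"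
  unfolding bipartite_graph_def nbhd_def by blast

lemma bip_nV: "bipartite_graph U V E \<Longrightarrow> v \<in> V \<Longrightarrow> nbhd E v \<subseteq> U"
  unfolding bipartite_graph_def nbhd_def by blast

lemma chain_V:
  assumes b: "bipartite_graph U V E" and c: "chain_graph U V E" and "v1 \<in> V" "v2 \<in> V"
  shows "nbhd E v1 \<subseteq> nbhd E v2 \<or> nbhd E v2 \<subseteq> nbhd E v1"
proof (rule ccontr)
  assume "\<not> ?thesis"
  then obtain u1 u2 where "u1 \<in> nbhd E v1" "u1 \<notin> nbhd E v2" "u2 \<in> nbhd E v2" "u2 \<notin> nbhd E v1"
    by blast
  moreover have "u1 \<in> U" "u2 \<in> U" using calculation bip_nV[OF b] assms(3,4) by blast+
  ultimately show False using c bip_sym[OF b] unfolding chain_graph_def nbhd_def by blast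
qed

lemma edge_key:
  assumes b: "bipartite_graph U V E" and c: "chain_graph U V E" and u: "u \<in> U" and v: "v \<in> V"
  shows "(E u v \<longrightarrow> kU V E u < kV V E v) \<and> (\<not> E u v \<longrightarrow> kV V E v < kU V E u)"
proof -
  have fV: "finite V" using b unfolding bipartite_graph_def by blast
  let ?S = "{v' \<in> V. nbhd E v' \<subset> nbhd E v}"
  have 1: "E u v \<longrightarrow> kU V E u < kV V E v"
  proof
    assume e: "E u v"
    have "V - nbhd E u \<subseteq> ?S"
    proof
      fix v' assume v': "v' \<in> V - nbhd E u"
      hence "u \<notin> nbhd E v'" using bip_sym[OF b] unfolding nbhd_def by auto
      moreover have "u \<in> nbhd E v" using e bip_sym[OF b] unfolding nbhd_def by auto
      ultimately show "v' \<in> ?S" using chain_V[OF b c, of v' v] v v' by auto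
    qed
    hence "card (V - nbhd E u) \<le> card ?S" using fV by (intro card_mono) auto
    thus "kU V E u < kV V E v" unfolding kU_def kV_def by simp
  qed
  have 2: "\<not> E u v \<longrightarrow> kV V E v < kU V E u"
  proof
    assume e: "\<not> E u v"
    have "?S \<subset> V - nbhd E u"
    proof -
      have "?S \<subseteq> V - nbhd E u"
      proof
        fix v' assume v': "v' \<in> ?S"
        have "u \<notin> nbhd E v" using e bip_sym[OF b] unfolding nbhd_def by auto
        hence "u \<notin> nbhd E v'" using v' by auto
        thus "v' \<in> V - nbhd E u" using v' bip_sym[OF b] unfolding nbhd_def by auto
      qed
      moreover have "v \<in> V - nbhd E u" "v \<notin> ?S" using e v unfolding nbhd_def by auto
      ultimately show ?thesis by blast
    qed
    hence "card ?S < card (V - nbhd E u)" using fV by (intro psubset_card_mono) auto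
    thus "kV V E v < kU V E u" unfolding kU_def kV_def by simp
  qed
  show ?thesis using 1 2 by blast
qed

lemma U_key:
  assumes b: "bipartite_graph U V E" and c: "chain_graph U V E" and u: "u1 \<in> U" "u2 \<in> U"
  shows "kU V E u1 < kU V E u2 \<longleftrightarrow> nbhd E u1 \<supset> nbhd E u2"
proof
  have fV: "finite V" using b unfolding bipartite_graph_def by blast
  assume l: "kU V E u1 < kU V E u2"
  hence l': "card (V - nbhd E u1) < card (V - nbhd E u2)" unfolding kU_def by simp
  have "\<not> nbhd E u1 \<subseteq> nbhd E u2"
  proof
    assume "nbhd E u1 \<subseteq> nbhd E u2"
    hence "V - nbhd E u2 \<subseteq> V - nbhd E u1" by blast
    hence "card (V - nbhd E u2) \<le> card (V - nbhd E u1)" using fV by (intro card_mono) auto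
    thus False using l' by simp
  qed
  thus "nbhd E u1 \<supset> nbhd E u2" using c u unfolding chain_graph_def by blast
next
  have fV: "finite V" using b unfolding bipartite_graph_def by blast
  assume "nbhd E u1 \<supset> nbhd E u2"
  moreover have "nbhd E u1 \<subseteq> V" using bip_nU[OF b u(1)] .
  ultimately have "V - nbhd E u1 \<subset> V - nbhd E u2" by blast
  hence "card (V - nbhd E u1) < card (V - nbhd E u2)" using fV by (intro psubset_card_mono) auto
  thus "kU V E u1 < kU V E u2" unfolding kU_def by simp
qed

lemma V_key:
  assumes b: "bipartite_graph U V E" and c: "chain_graph U V E" and v: "v1 \<in> V" "v2 \<in> V"
  shows "kV V E v1 < kV V E v2 \<longleftrightarrow> nbhd E v1 \<subset> nbhd E v2"
proof
  have fV: "finite V" using b unfolding bipartite_graph_def by blast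
  assume l: "kV V E v1 < kV V E v2"
  hence l': "card {v' \<in> V. nbhd E v' \<subset> nbhd E v1} < card {v' \<in> V. nbhd E v' \<subset> nbhd E v2}"
    unfolding kV_def by simp
  have "\<not> nbhd E v2 \<subseteq> nbhd E v1"
  proof
    assume "nbhd E v2 \<subseteq> nbhd E v1"
    hence "{v' \<in> V. nbhd E v' \<subset> nbhd E v2} \<subseteq> {v' \<in> V. nbhd E v' \<subset> nbhd E v1}" by blast
    hence "card {v' \<in> V. nbhd E v' \<subset> nbhd E v2} \<le> card {v' \<in> V. nbhd E v' \<subset> nbhd E v1}"
      using fV by (intro card_mono) auto
    thus False using l' by simp
  qed
  thus "nbhd E v1 \<subset> nbhd E v2" using chain_V[OF b c v] by blast
next
  have fV: "finite V" using b unfolding bipartite_graph_def by blast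
  assume s: "nbhd E v1 \<subset> nbhd E v2"
  have "{v' \<in> V. nbhd E v' \<subset> nbhd E v1} \<subset> {v' \<in> V. nbhd E v' \<subset> nbhd E v2}"
    using s v by blast
  hence "card {v' \<in> V. nbhd E v' \<subset> nbhd E v1} < card {v' \<in> V. nbhd E v' \<subset> nbhd E v2}"
    using fV by (intro psubset_card_mono) auto
  thus "kV V E v1 < kV V E v2" unfolding kV_def by simp
qed

lemma key_inj:
  assumes b: "bipartite_graph U V E" and c: "chain_graph U V E" and nt: "no_twins U V E"
    and x: "x \<in> U \<union> V" and y: "y \<in> U \<union> V" and ne: "x \<noteq> y"
  shows "key U V E x \<noteq> key U V E y"
proof -
  have d: "U \<inter> V = {}" using b unfolding bipartite_graph_def by blast
  have nn: "nbhd E x \<noteq> nbhd E y" using nt x y ne unfolding no_twins_def by blast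
  show ?thesis
  proof (cases "x \<in> U")
    case xU: True
    show ?thesis
    proof (cases "y \<in> U")
      case True
      have "nbhd E x \<subseteq> nbhd E y \<or> nbhd E y \<subseteq> nbhd E x" using c xU True unfolding chain_graph_def by blast
      hence "nbhd E x \<supset> nbhd E y \<or> nbhd E y \<supset> nbhd E x" using nn by blast
      then show ?thesis using U_key[OF b c xU True] U_key[OF b c True xU] xU True
        unfolding key_def by auto
    next
      case False
      then show ?thesis using xU unfolding key_def kU_def kV_def by presburger
    qed
  next
    case xV: False
    hence xV': "x \<in> V" using x by blast
    show ?thesis
    proof (cases "y \<in> U")
      case True
      then show ?thesis using xV unfolding key_def kU_def kV_def by presburger
    next
      case False
      hence yV: "y \<in> V" using y by blast
      have "nbhd E x \<subset> nbhd E y \<or> nbhd E y \<subset> nbhd E x" using chain_V[OF b c xV' yV] nn by blast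
      then show ?thesis using V_key[OF b c xV' yV] V_key[OF b c yV xV'] xV False
        unfolding key_def by auto
    qed
  qed
qed

lemma KR_lin:
  assumes b: "bipartite_graph U V E" and c: "chain_graph U V E" and nt: "no_twins U V E"
  shows "lin_order (U \<union> V) (KR U V E)"
proof -
  have "KR U V E \<subseteq> (U \<union> V) \<times> (U \<union> V)" unfolding KR_def by auto
  moreover have "trans (KR U V E)" unfolding trans_def KR_def by auto
  moreover have "irrefl (KR U V E)" unfolding irrefl_def KR_def by auto
  moreover have "total_on (U \<union> V) (KR U V E)"
    unfolding total_on_def
  proof (intro ballI impI)
    fix x y assume x: "x \<in> U \<union> V" and y: "y \<in> U \<union> V" and ne: "x \<noteq> y"
    have "key U V E x \<noteq> key U V E y" by (rule key_inj[OF b c nt x y ne])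
    hence "key U V E x < key U V E y \<or> key U V E y < key U V E x" by linarith
    thus "(x, y) \<in> KR U V E \<or> (y, x) \<in> KR U V E" using x y unfolding KR_def by auto
  qed
  ultimately show ?thesis unfolding lin_order_def strict_linear_order_on_def by blast
qed

lemma KR_mem: "(a,b) \<in> KR U V E \<longleftrightarrow> a \<in> U \<union> V \<and> b \<in> U \<union> V \<and> key U V E a < key U V E b"
  unfolding KR_def by simp

lemma c_rhs:
  assumes b: "bipartite_graph U V E" and c: "chain_graph U V E" and u: "u \<in> U" and v: "v \<in> V"
  shows "(\<forall>v' \<in> nbhd E u. nbhd E v \<subset> nbhd E v') \<longleftrightarrow> \<not> E u v"
proof
  assume "\<forall>v' \<in> nbhd E u. nbhd E v \<subset> nbhd E v'"
  thus "\<not> E u v" unfolding nbhd_def by blast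
next
  assume e: "\<not> E u v"
  show "\<forall>v' \<in> nbhd E u. nbhd E v \<subset> nbhd E v'"
  proof
    fix v' assume v': "v' \<in> nbhd E u"
    have v'V: "v' \<in> V" using v' bip_nU[OF b u] by blast
    have "u \<in> nbhd E v'" "u \<notin> nbhd E v" using v' e bip_sym[OF b] unfolding nbhd_def by auto
    thus "nbhd E v \<subset> nbhd E v'" using chain_V[OF b c v v'V] by blast
  qed
qed

lemma key_U: "x \<in> U \<Longrightarrow> key U V E x = kU V E x" unfolding key_def by simp
lemma key_V: "x \<notin> U \<Longrightarrow> key U V E x = kV V E x" unfolding key_def by simp

lemma KR_normalized:
  assumes b: "bipartite_graph U V E" and c: "chain_graph U V E" and nt: "no_twins U V E"
  shows "normalized U V E (KR U V E) (KR U V E)"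
proof -
  have d: "U \<inter> V = {}" using b unfolding bipartite_graph_def by blast
  have r: "representation U V E (KR U V E) (KR U V E)"
    unfolding representation_def
  proof (intro conjI ballI)
    fix u v assume u: "u \<in> U" and v: "v \<in> V"
    have vU: "v \<notin> U" using v d by auto
    have "E u v \<longleftrightarrow> key U V E u < key U V E v"
      using edge_key[OF b c u v] unfolding key_U[OF u] key_V[OF vU] by auto
    thus "E u v \<longleftrightarrow> ((u, v) \<in> KR U V E \<and> (u, v) \<in> KR U V E)"
      using u v unfolding KR_mem by blast
  qed (rule KR_lin[OF b c nt])+
  show ?thesis unfolding normalized_def
  proof (intro conjI ballI r)
    fix u1 u2 assume u: "u1 \<in> U" "u2 \<in> U"
    have "key U V E u1 < key U V E u2 \<longleftrightarrow> nbhd E u1 \<supset> nbhd E u2"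
      using U_key[OF b c u] unfolding key_U[OF u(1)] key_U[OF u(2)] .
    thus "((u1, u2) \<in> KR U V E \<and> (u1, u2) \<in> KR U V E) \<longleftrightarrow> nbhd E u1 \<supset> nbhd E u2"
      using u unfolding KR_mem by blast
  next
    fix v1 v2 assume v: "v1 \<in> V" "v2 \<in> V"
    hence vU: "v1 \<notin> U" "v2 \<notin> U" using d by auto
    have "key U V E v1 < key U V E v2 \<longleftrightarrow> nbhd E v1 \<subset> nbhd E v2"
      using V_key[OF b c v] unfolding key_V[OF vU(1)] key_V[OF vU(2)] .
    thus "((v1, v2) \<in> KR U V E \<and> (v1, v2) \<in> KR U V E) \<longleftrightarrow> nbhd E v1 \<subset> nbhd E v2"
      using v unfolding KR_mem by blast
  next
    fix u v assume u: "u \<in> U" and v: "v \<in> V"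
    have vU: "v \<notin> U" using v d by auto
    have "key U V E v < key U V E u \<longleftrightarrow> \<not> E u v"
      using edge_key[OF b c u v] unfolding key_U[OF u] key_V[OF vU] by auto
    thus "((v, u) \<in> KR U V E \<and> (v, u) \<in> KR U V E) \<longleftrightarrow> (\<forall>v' \<in> nbhd E u. nbhd E v \<subset> nbhd E v')"
      using c_rhs[OF b c u v] u v unfolding KR_mem by blast
  qed
qed

lemma norm_a: "normalized U V E X Y \<Longrightarrow> u1 \<in> U \<Longrightarrow> u2 \<in> U \<Longrightarrow> nbhd E u1 \<supset> nbhd E u2 \<Longrightarrow> (u1,u2) \<in> X \<and> (u1,u2) \<in> Y"
  unfolding normalized_def by simp
lemma norm_b: "normalized U V E X Y \<Longrightarrow> v1 \<in> V \<Longrightarrow> v2 \<in> V \<Longrightarrow> nbhd E v1 \<subset> nbhd E v2 \<Longrightarrow> (v1,v2) \<in> X \<and> (v1,v2) \<in> Y"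
  unfolding normalized_def by simp
lemma norm_c: "normalized U V E X Y \<Longrightarrow> u \<in> U \<Longrightarrow> v \<in> V \<Longrightarrow> (\<forall>v' \<in> nbhd E u. nbhd E v \<subset> nbhd E v') \<Longrightarrow> (v,u) \<in> X \<and> (v,u) \<in> Y"
  unfolding normalized_def by simp
lemma norm_e: "normalized U V E X Y \<Longrightarrow> u \<in> U \<Longrightarrow> v \<in> V \<Longrightarrow> E u v \<Longrightarrow> (u,v) \<in> X \<and> (u,v) \<in> Y"
  unfolding normalized_def representation_def by simp

lemma norm_a': "normalized U V E X Y \<Longrightarrow> u1 \<in> U \<Longrightarrow> u2 \<in> U \<Longrightarrow> (u1,u2) \<in> X \<Longrightarrow> (u1,u2) \<in> Y \<Longrightarrow> nbhd E u1 \<supset> nbhd E u2"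
proof -
  assume n: "normalized U V E X Y" and u: "u1 \<in> U" "u2 \<in> U" and xy: "(u1,u2) \<in> X" "(u1,u2) \<in> Y"
  have "\<forall>u1 \<in> U. \<forall>u2 \<in> U. ((u1, u2) \<in> X \<and> (u1, u2) \<in> Y) \<longleftrightarrow> nbhd E u1 \<supset> nbhd E u2"
    using n unfolding normalized_def by (elim conjE)
  thus ?thesis using u xy by blast
qed
lemma norm_tot: "normalized U V E X Y \<Longrightarrow> u1 \<in> U \<Longrightarrow> u2 \<in> U \<Longrightarrow> u1 \<noteq> u2 \<Longrightarrow> (u1,u2) \<in> X \<or> (u2,u1) \<in> X"
proof -
  assume n: "normalized U V E X Y" and "u1 \<in> U" "u2 \<in> U" "u1 \<noteq> u2"
  have "representation U V E X Y" using n unfolding normalized_def by (rule conjunct1)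
  hence "lin_order (U \<union> V) X" unfolding representation_def by (rule conjunct1)
  hence "total_on (U \<union> V) X" unfolding lin_order_def strict_linear_order_on_def by blast
  thus ?thesis using \<open>u1 \<in> U\<close> \<open>u2 \<in> U\<close> \<open>u1 \<noteq> u2\<close> unfolding total_on_def by blast
qed

lemma KR_sub:
  assumes b: "bipartite_graph U V E" and c: "chain_graph U V E" and n: "normalized U V E X Y"
    and k: "(a,x) \<in> KR U V E"
  shows "(a,x) \<in> X \<and> (a,x) \<in> Y"
proof -
  have a: "a \<in> U \<union> V" and x: "x \<in> U \<union> V" and lt: "key U V E a < key U V E x"
    using k unfolding KR_mem by auto
  show ?thesis
  proof (cases "a \<in> U")
    case aU: True
    show ?thesis
    proof (cases "x \<in> U")
      case True
      have "nbhd E a \<supset> nbhd E x" using U_key[OF b c aU True] lt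
        unfolding key_U[OF aU] key_U[OF True] by blast
      then show ?thesis by (rule norm_a[OF n aU True])
    next
      case False
      hence xV: "x \<in> V" using x by blast
      have "E a x" using edge_key[OF b c aU xV] lt
        unfolding key_U[OF aU] key_V[OF False] by auto
      then show ?thesis by (rule norm_e[OF n aU xV])
    qed
  next
    case aV': False
    hence aV: "a \<in> V" using a by blast
    show ?thesis
    proof (cases "x \<in> U")
      case True
      have "\<not> E x a" using edge_key[OF b c True aV] lt
        unfolding key_U[OF True] key_V[OF aV'] by auto
      hence "\<forall>v' \<in> nbhd E x. nbhd E a \<subset> nbhd E v'" using c_rhs[OF b c True aV] by blast
      then show ?thesis by (rule norm_c[OF n True aV])
    next
      case False
      hence xV: "x \<in> V" using x by blast
      have "nbhd E a \<subset> nbhd E x" using V_key[OF b c aV xV] lt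
        unfolding key_V[OF aV'] key_V[OF False] by blast
      then show ?thesis by (rule norm_b[OF n aV xV])
    qed
  qed
qed

lemma lin_eq:
  assumes l1: "lin_order A K" and l2: "lin_order A X" and s: "K \<subseteq> X"
  shows "X = K"
proof
  show "K \<subseteq> X" by (rule s)
  have sub: "X \<subseteq> A \<times> A" using l2 unfolding lin_order_def by blast
  have tr: "trans X" and ir: "irrefl X"
    using l2 unfolding lin_order_def strict_linear_order_on_def by blast+
  have tot: "total_on A K" using l1 unfolding lin_order_def strict_linear_order_on_def by blast
  show "X \<subseteq> K"
  proof (rule subrelI)
    fix a x assume p: "(a,x) \<in> X"
    have ax: "a \<in> A" "x \<in> A" using sub p by auto
    have ne: "a \<noteq> x" using ir p unfolding irrefl_def by blast
    show "(a,x) \<in> K"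
    proof (rule ccontr)
      assume "(a,x) \<notin> K"
      hence "(x,a) \<in> K" using tot ax ne unfolding total_on_def by blast
      hence "(x,a) \<in> X" using s by blast
      with tr p have "(a,a) \<in> X" by (rule transD)
      thus False using ir unfolding irrefl_def by blast
    qed
  qed
qed

lemma normalized_swap: "normalized U V E X Y \<Longrightarrow> normalized U V E Y X"
  unfolding normalized_def representation_def by (simp add: conj_comms)

theorem theorem1:
  fixes U V :: "'a set" and E :: "'a \<Rightarrow> 'a \<Rightarrow> bool"
  assumes "bipartite_graph U V E"
    and "tdor_graph U V E"
    and "no_twins U V E"
  shows "(\<exists>!XY. normalized U V E (fst XY) (snd XY)) \<longleftrightarrow> chain_graph U V E"
proof
  assume ex: "\<exists>!XY. normalized U V E (fst XY) (snd XY)"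
  then obtain X Y where n: "normalized U V E X Y" by auto
  show "chain_graph U V E"
  proof (rule ccontr)
    assume nc: "\<not> chain_graph U V E"
    then obtain u1 u2 where u: "u1 \<in> U" "u2 \<in> U" and
      inc: "\<not> nbhd E u1 \<subseteq> nbhd E u2" "\<not> nbhd E u2 \<subseteq> nbhd E u1"
      unfolding chain_graph_def by blast
    have "u1 \<noteq> u2" using inc by blast
    hence tot: "(u1,u2) \<in> X \<or> (u2,u1) \<in> X" using norm_tot[OF n u] by blast
    have "X \<noteq> Y"
    proof
      assume "X = Y"
      thus False using tot norm_a'[OF n u(1) u(2)] norm_a'[OF n u(2) u(1)] inc by blast
    qed
    moreover have "normalized U V E (fst (Y,X)) (snd (Y,X))" using normalized_swap[OF n] by simp
    moreover have "normalized U V E (fst (X,Y)) (snd (X,Y))" using n by simp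
    ultimately have "(Y,X) = (X,Y)" using ex by blast
    thus False using \<open>X \<noteq> Y\<close> by simp
  qed
next
  assume c: "chain_graph U V E"
  note b = assms(1) and nt = assms(3)
  show "\<exists>!XY. normalized U V E (fst XY) (snd XY)"
  proof (rule ex1I[of _ "(KR U V E, KR U V E)"])
    show "normalized U V E (fst (KR U V E, KR U V E)) (snd (KR U V E, KR U V E))"
      using KR_normalized[OF b c nt] by simp
  next
    fix XY assume n: "normalized U V E (fst XY) (snd XY)"
    have l: "lin_order (U \<union> V) (fst XY)" "lin_order (U \<union> V) (snd XY)"
      using n unfolding normalized_def representation_def by auto
    have "KR U V E \<subseteq> fst XY" "KR U V E \<subseteq> snd XY" using KR_sub[OF b c n] by auto
    hence "fst XY = KR U V E" "snd XY = KR U V E"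
      using lin_eq[OF KR_lin[OF b c nt]] l by auto
    thus "XY = (KR U V E, KR U V E)" by (simp add: prod_eq_iff)
  qed
qed

end
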